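(* Let $\mathcal A\in\mathbb C^{n_1\times n_2\times n_3}$ and let $\mathcal A^{-,\dagger}$ be a fixed element of $\mathcal A\{-,\dagger\}$. Then $$\mathcal A\{-,\dagger\}=\left\{\mathcal A^{-,\dagger}+(\mathcal I-\mathcal A^{-,\dagger}\mathcal A)\mathcal W\mathcal A\mathcal A^{-,\dagger}\ :\ \mathcal W\in\mathbb C^{n_2\times n_1\times n_3}\right\}.$$
   Context: Fix a nonsingular matrix $M\in\mathbb C^{n_3\times n_3}$. For $\mathcal C\in\mathbb C^{n_1\times n_2\times n_3}$ let $\widehat{\mathcal C}=\mathcal C\times_3M$, i.e. $\widehat{\mathcal C}_{ijk}=\sum_{l=1}^{n_3}M_{kl}\mathcal C_{ijl}$, and let $\widehat{\mathcal C}^{(i)}$ denote its $i$-th frontal slice. The M-product $\mathcal C\star_M\mathcal D$ of $\mathcal C\in\mathbb C^{n_1\times n_2\times n_3}$ and $\mathcal D\in\mathbb C^{n_2\times l\times n_3}$ is the unique tensor with $\widehat{\mathcal C\star_M\mathcal D}^{(i)}=\widehat{\mathcal C}^{(i)}\widehat{\mathcal D}^{(i)}$ for all $i\in[n_3]$. Juxtaposition of tensors denotes the M-product. The identity tensor $\mathcal I\in\mathbb C^{n\times n\times n_3}$ is defined by $\widehat{\mathcal I}^{(i)}=I_n$ for all $i$. The conjugate transpose $\mathcal A^*$ is defined by $\widehat{\mathcal A^*}^{(i)}=(\widehat{\mathcal A}^{(i)})^*$. The Moore–Penrose inverse $\mathcal A^\dagger$ is the unique $\mathcal W$ satisfying (1)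 $\mathcal A\mathcal W\mathcal A=\mathcal A$, (2) $\mathcal W\mathcal A\mathcal W=\mathcal W$, (3) $(\mathcal A\mathcal W)^*=\mathcal A\mathcal W$, (4) $(\mathcal W\mathcal A)^*=\mathcal W\mathcal A$. $\mathcal A\{1\}$ is the set of all $\mathcal W$ satisfying (1). The set of 1-MP inverses is $\mathcal A\{-,\dagger\}=\{\mathcal A^-\mathcal A\mathcal A^\dagger:\mathcal A^-\in\mathcal A\{1\}\}$. *)

theory Defs
  imports "HOL-Analysis.Analysis"
begin

text \<open>Third-order tensors in C^(m x n x k) are represented as complex^'k^'n^'m,
  entry (i,j,l) being A$i$j$l. The transform matrix M is complex^'k^'k.\<close>

definition mode3 :: "complex^'k^'k \<Rightarrow> complex^'k^'n^'m \<Rightarrow> complex^'k^'n^'m" where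
  "mode3 M A = (\<chi> i j k. \<Sum>l\<in>UNIV. M$k$l * A$i$j$l)"

definition slice :: "complex^'k^'n^'m \<Rightarrow> 'k \<Rightarrow> complex^'n^'m" where
  "slice A k = (\<chi> i j. A$i$j$k)"

definition of_slices :: "('k \<Rightarrow> complex^'n^'m) \<Rightarrow> complex^'k^'n^'m" where
  "of_slices S = (\<chi> i j k. (S k)$i$j)"

definition hat :: "complex^'k^'k \<Rightarrow> complex^'k^'n^'m \<Rightarrow> 'k \<Rightarrow> complex^'n^'m" where
  "hat M A k = slice (mode3 M A) k"

definition unhat :: "complex^'k^'k \<Rightarrow> ('k \<Rightarrow> complex^'n^'m) \<Rightarrow> complex^'k^'n^'m" where
  "unhat M S = mode3 (matrix_inv M) (of_slices S)"

definition mprod :: "complex^'k^'k \<Rightarrow> complex^'k^'n^'m \<Rightarrow> complex^'k^'p^'n \<Rightarrow> complex^'k^'p^'m" where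
  "mprod M C D = unhat M (\<lambda>k. hat M C k ** hat M D k)"

definition cmat_adj :: "complex^'n^'m \<Rightarrow> complex^'m^'n" where
  "cmat_adj X = (\<chi> i j. cnj (X$j$i))"

definition tconj :: "complex^'k^'k \<Rightarrow> complex^'k^'n^'m \<Rightarrow> complex^'k^'m^'n" where
  "tconj M A = unhat M (\<lambda>k. cmat_adj (hat M A k))"

definition tid :: "complex^'k^'k \<Rightarrow> complex^'k^'n^'n" where
  "tid M = unhat M (\<lambda>k. mat 1)"

definition is_MP :: "complex^'k^'k \<Rightarrow> complex^'k^'n^'m \<Rightarrow> complex^'k^'m^'n \<Rightarrow> bool" where
  "is_MP M A W \<longleftrightarrow> mprod M (mprod M A W) A = A \<and> mprod M (mprod M W A) W = W \<and>
     tconj M (mprod M A W) = mprod M A W \<and> tconj M (mprod M W A) = mprod M W A"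

definition tpinv :: "complex^'k^'k \<Rightarrow> complex^'k^'n^'m \<Rightarrow> complex^'k^'m^'n" where
  "tpinv M A = (THE W. is_MP M A W)"

definition inv1 :: "complex^'k^'k \<Rightarrow> complex^'k^'n^'m \<Rightarrow> (complex^'k^'m^'n) set" where
  "inv1 M A = {W. mprod M (mprod M A W) A = A}"

definition one_MP :: "complex^'k^'k \<Rightarrow> complex^'k^'n^'m \<Rightarrow> (complex^'k^'m^'n) set" where
  "one_MP M A = {mprod M (mprod M G A) (tpinv M A) | G. G \<in> inv1 M A}"

end

theory Submission imports Defs begin

lemma mm_add_rdistrib: "((B + C) ** (A::'a::semiring_1^_^_)) = (B ** A) + (C ** A)"
  by (vector matrix_matrix_mult_def sum.distrib[symmetric] field_simps)
lemma mm_diff_ldistrib: "((A::'a::ring_1^_^_) ** (B - C)) = (A ** B) - (A ** C)"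
  by (vector matrix_matrix_mult_def sum_subtractf[symmetric] field_simps)
lemma mm_diff_rdistrib: "((B - C) ** (A::'a::ring_1^_^_)) = (B ** A) - (C ** A)"
  by (vector matrix_matrix_mult_def sum_subtractf[symmetric] field_simps)

lemma adj_adj[simp]: "cmat_adj (cmat_adj X) = X"
  by (simp add: cmat_adj_def vec_eq_iff)
lemma adj_mult: "cmat_adj (X ** Y) = cmat_adj Y ** cmat_adj X"
  by (simp add: cmat_adj_def vec_eq_iff matrix_matrix_mult_def mult.commute)
lemma adj_diff: "cmat_adj (X - Y) = cmat_adj X - cmat_adj Y"
  by (simp add: cmat_adj_def vec_eq_iff)
lemma adj_add: "cmat_adj (X + Y) = cmat_adj X + cmat_adj Y"
  by (simp add: cmat_adj_def vec_eq_iff)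
lemma adj_mat1[simp]: "cmat_adj (mat 1) = mat 1"
  by (simp add: cmat_adj_def vec_eq_iff mat_def)

lemma adj_zero_cancel:
  fixes Y :: "complex^'n^'m"
  assumes "cmat_adj Y ** Y = 0" shows "Y = 0"
proof -
  have "Y $ i $ j = 0" for i j
  proof -
    have "(\<Sum>l\<in>UNIV. cnj (Y$l$j) * Y$l$j) = 0"
      using assms by (simp add: cmat_adj_def matrix_matrix_mult_def vec_eq_iff)
    hence "(\<Sum>l\<in>UNIV. Y$l$j * cnj (Y$l$j)) = 0" by (simp add: mult.commute)
    hence "(\<Sum>l\<in>UNIV. complex_of_real ((cmod (Y$l$j))\<^sup>2)) = 0"
      by (simp only: complex_mult_cnj cmod_power2)
    hence "(\<Sum>l\<in>UNIV. (cmod (Y$l$j))\<^sup>2) = 0"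
      by (metis of_real_eq_0_iff of_real_sum)
    hence "\<forall>l\<in>UNIV. (cmod (Y$l$j))\<^sup>2 = 0"
      by (subst (asm) sum_nonneg_eq_0_iff) auto
    thus ?thesis by simp
  qed
  thus ?thesis by (simp add: vec_eq_iff)
qed

lemma cancel_left:
  fixes P :: "complex^'n^'m"
  assumes "cmat_adj P ** P ** X = cmat_adj P ** P ** Y" shows "P ** X = P ** Y"
proof -
  have "cmat_adj (P ** (X - Y)) ** (P ** (X - Y)) = cmat_adj (X - Y) ** (cmat_adj P ** P ** (X - Y))"
    by (simp add: adj_mult matrix_mul_assoc)
  also have "\<dots> = 0" using assms by (simp add: mm_diff_ldistrib)
  finally have "P ** (X - Y) = 0" by (rule adj_zero_cancel)
  thus ?thesis by (simp add: mm_diff_ldistrib)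
qed

lemma cancel_right:
  fixes P :: "complex^'n^'m"
  assumes "X ** P ** cmat_adj P = Y ** P ** cmat_adj P" shows "X ** P = Y ** P"
proof -
  have "cmat_adj (cmat_adj P) ** cmat_adj P ** cmat_adj X = cmat_adj (cmat_adj P) ** cmat_adj P ** cmat_adj Y"
    using arg_cong[OF assms, of cmat_adj] by (simp add: adj_mult matrix_mul_assoc)
  hence "cmat_adj P ** cmat_adj X = cmat_adj P ** cmat_adj Y" by (rule cancel_left)
  hence "cmat_adj (cmat_adj P ** cmat_adj X) = cmat_adj (cmat_adj P ** cmat_adj Y)" by simp
  thus ?thesis by (simp add: adj_mult)
qed

lemma inner_exists:
  fixes A :: "complex^'n^'m"
  shows "\<exists>G. A ** G ** A = A"
proof -
  obtain g where g: "Vector_Spaces.linear (*s) (*s) g" "\<forall>v\<in>((*v) A) ` UNIV. A *v (g v) = v"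
    using vec.linear_exists_right_inverse_on[OF matrix_vector_mul_linear_gen[of A] vec.subspace_UNIV]
    by blast
  have "(A ** matrix g ** A) *v x = A *v x" for x
    using g by (simp add: matrix_vector_mul_assoc[symmetric] matrix_works)
  thus ?thesis by (metis matrix_eq)
qed

definition mat_MP :: "complex^'n^'m \<Rightarrow> complex^'m^'n \<Rightarrow> bool" where
  "mat_MP A W \<longleftrightarrow> A ** W ** A = A \<and> W ** A ** W = W \<and>
     cmat_adj (A ** W) = A ** W \<and> cmat_adj (W ** A) = W ** A"

lemmas mra = matrix_mul_assoc[symmetric]

lemma Zform: "X ** Y = W \<Longrightarrow> X ** (Y ** Z) = W ** Z"
  by (simp add: matrix_mul_assoc)

lemma MP_exists:
  fixes A :: "complex^'n^'m"
  shows "\<exists>W. mat_MP A W"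
proof -
  define As where "As = cmat_adj A"
  have AsA: "cmat_adj As = A" by (simp add: As_def)
  obtain G1 where G1: "(A ** As) ** G1 ** (A ** As) = A ** As" using inner_exists by blast
  obtain G2 where G2: "(As ** A) ** G2 ** (As ** A) = As ** A" using inner_exists by blast
  have f1: "A ** (As ** (G1 ** A)) = A"
  proof -
    have "(A ** As ** G1) ** A ** cmat_adj A = mat 1 ** A ** cmat_adj A"
      using G1 by (simp add: As_def mra)
    hence "(A ** As ** G1) ** A = mat 1 ** A" by (rule cancel_right)
    thus ?thesis by (simp add: mra)
  qed
  have f2gen: "A ** (G ** (As ** A)) = A" if "(As ** A) ** G ** (As ** A) = As ** A" for G
  proof -
    have "cmat_adj A ** A ** (G ** As ** A) = cmat_adj A ** A ** mat 1"
      using that by (simp add: As_def mra)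
    hence "A ** (G ** As ** A) = A ** mat 1" by (rule cancel_left)
    thus ?thesis by (simp add: mra)
  qed
  have f2: "A ** (G2 ** (As ** A)) = A" using f2gen[OF G2] .
  have G2': "(As ** A) ** cmat_adj G2 ** (As ** A) = As ** A"
  proof -
    have "cmat_adj ((As ** A) ** G2 ** (As ** A)) = cmat_adj (As ** A)" using G2 by simp
    thus ?thesis by (simp add: adj_mult AsA matrix_mul_assoc As_def[symmetric])
  qed
  have f3: "A ** (cmat_adj G2 ** As) = A ** (G2 ** As)"
  proof -
    have "(A ** cmat_adj G2) ** As ** cmat_adj As = (A ** G2) ** As ** cmat_adj As"
      using f2gen[OF G2'] f2 by (simp add: AsA mra)
    hence "(A ** cmat_adj G2) ** As = (A ** G2) ** As" by (rule cancel_right)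
    thus ?thesis by (simp add: mra)
  qed
  have G1': "(A ** As) ** cmat_adj G1 ** (A ** As) = A ** As"
  proof -
    have "cmat_adj ((A ** As) ** G1 ** (A ** As)) = cmat_adj (A ** As)" using G1 by simp
    thus ?thesis by (simp add: adj_mult AsA matrix_mul_assoc As_def[symmetric])
  qed
  have f1gen: "A ** (As ** (G ** A)) = A" if "(A ** As) ** G ** (A ** As) = A ** As" for G
  proof -
    have "(A ** As ** G) ** A ** cmat_adj A = mat 1 ** A ** cmat_adj A"
      using that by (simp add: As_def mra)
    hence "(A ** As ** G) ** A = mat 1 ** A" by (rule cancel_right)
    thus ?thesis by (simp add: mra)
  qed
  have f4: "As ** (cmat_adj G1 ** A) = As ** (G1 ** A)"
  proof -
    have "cmat_adj As ** As ** (cmat_adj G1 ** A) = cmat_adj As ** As ** (G1 ** A)"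
      using f1gen[OF G1'] f1 by (simp add: AsA mra)
    thus ?thesis by (rule cancel_left)
  qed
  note f1Z = Zform[OF f1[simplified mra], simplified mra]
  note f2Z = Zform[OF f2[simplified mra], simplified mra]
  define W where "W = As ** G1 ** A ** G2 ** As"
  have e1: "A ** W ** A = A" by (simp add: W_def mra f1Z f2)
  have e2: "W ** A ** W = W" by (simp add: W_def mra f1Z f2Z)
  have AW: "A ** W = A ** (G2 ** As)" by (simp add: W_def mra f1Z)
  have WA: "W ** A = As ** (G1 ** A)" by (simp add: W_def mra f2)
  have e3: "cmat_adj (A ** W) = A ** W"
    unfolding AW by (simp add: adj_mult AsA mra As_def[symmetric] f3)
  have e4: "cmat_adj (W ** A) = W ** A"
    unfolding WA by (simp add: adj_mult AsA mra As_def[symmetric] f4)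
  show ?thesis using e1 e2 e3 e4 unfolding mat_MP_def by blast
qed

lemma MP_unique:
  fixes A :: "complex^'n^'m"
  assumes h1: "mat_MP A W1" and h2: "mat_MP A W2"
  shows "W1 = W2"
proof -
  have a1: "A ** W1 ** A = A" "W1 ** A ** W1 = W1" "cmat_adj (A ** W1) = A ** W1" "cmat_adj (W1 ** A) = W1 ** A"
    using h1 unfolding mat_MP_def by auto
  have a2: "A ** W2 ** A = A" "W2 ** A ** W2 = W2" "cmat_adj (A ** W2) = A ** W2" "cmat_adj (W2 ** A) = W2 ** A"
    using h2 unfolding mat_MP_def by auto
  have aA: "cmat_adj A = cmat_adj A ** cmat_adj W2 ** cmat_adj A"
    using arg_cong[OF a2(1), of cmat_adj] by (simp add: adj_mult mra)
  have aA': "cmat_adj A = cmat_adj A ** cmat_adj W1 ** cmat_adj A"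
    using arg_cong[OF a1(1), of cmat_adj] by (simp add: adj_mult mra)
  have "W1 = W1 ** (A ** W1)" using a1(2) by (simp add: mra)
  also have "\<dots> = W1 ** (cmat_adj W1 ** cmat_adj A)" using a1(3) by (simp add: adj_mult)
  also have "\<dots> = W1 ** (cmat_adj W1 ** (cmat_adj A ** cmat_adj W2 ** cmat_adj A))"
    using aA by simp
  also have "\<dots> = W1 ** (cmat_adj (A ** W1) ** cmat_adj (A ** W2))" by (simp add: adj_mult mra)
  also have "\<dots> = W1 ** ((A ** W1) ** (A ** W2))" using a1(3) a2(3) by simp
  also have "\<dots> = (W1 ** A ** W1) ** A ** W2" by (simp add: mra)
  also have "\<dots> = W1 ** A ** W2" using a1(2) by simp
  finally have r1: "W1 = W1 ** A ** W2" .
  have "W2 = (W2 ** A) ** W2" using a2(2) by (simp add: mra)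
  also have "\<dots> = (cmat_adj A ** cmat_adj W2) ** W2" using a2(4) by (simp add: adj_mult)
  also have "\<dots> = ((cmat_adj A ** cmat_adj W1 ** cmat_adj A) ** cmat_adj W2) ** W2"
    using aA' by simp
  also have "\<dots> = (cmat_adj (W1 ** A) ** cmat_adj (W2 ** A)) ** W2" by (simp add: adj_mult mra)
  also have "\<dots> = ((W1 ** A) ** (W2 ** A)) ** W2" using a1(4) a2(4) by simp
  also have "\<dots> = W1 ** A ** (W2 ** A ** W2)" by (simp add: mra)
  also have "\<dots> = W1 ** A ** W2" using a2(2) by simp
  finally show ?thesis using r1 by simp
qed

lemma mode3_mode3: "mode3 M (mode3 N T) = mode3 (M ** N) T"
  apply (simp add: mode3_def matrix_matrix_mult_def vec_eq_iff sum_distrib_left sum_distrib_right mult.assoc)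
  using sum.swap by fastforce

lemma mode3_id: "mode3 (mat 1) T = T"
  by (simp add: mode3_def mat_def vec_eq_iff if_distrib if_distribR sum.delta cong: if_cong)

lemma minv: "invertible M \<Longrightarrow> M ** matrix_inv M = mat 1 \<and> matrix_inv M ** M = mat 1"
  unfolding invertible_def matrix_inv_def by (rule someI_ex)

lemma slice_of_slices[simp]: "slice (of_slices S) = S"
  by (simp add: slice_def of_slices_def vec_eq_iff fun_eq_iff)
lemma of_slices_slice[simp]: "of_slices (slice T) = T"
  by (simp add: slice_def of_slices_def vec_eq_iff fun_eq_iff)

lemma hat_eq: "hat M A = slice (mode3 M A)" by (simp add: hat_def fun_eq_iff)

lemma hat_unhat: "invertible M \<Longrightarrow> hat M (unhat M S) = S"
  using minv[of M] by (simp add: hat_eq unhat_def mode3_mode3 mode3_id)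

lemma unhat_hat: "invertible M \<Longrightarrow> unhat M (hat M A) = A"
  using minv[of M] by (simp add: hat_eq unhat_def mode3_mode3 mode3_id)

lemma teq: "invertible M \<Longrightarrow> (\<And>k. hat M A k = hat M B k) \<Longrightarrow> A = B"
  by (metis unhat_hat ext)

lemma teq_iff: "invertible M \<Longrightarrow> A = B \<longleftrightarrow> (\<forall>k. hat M A k = hat M B k)"
  using teq by metis

lemma hat_mprod: "invertible M \<Longrightarrow> hat M (mprod M C D) k = hat M C k ** hat M D k"
  by (simp add: mprod_def hat_unhat)

lemma hat_add: "hat M (A + B) k = hat M A k + hat M B k"
  by (simp add: hat_def slice_def mode3_def vec_eq_iff sum.distrib distrib_left)

lemma hat_diff: "hat M (A - B) k = hat M A k - hat M B k"
  by (simp add: hat_def slice_def mode3_def vec_eq_iff sum_subtractf right_diff_distrib)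

lemma hat_tid: "invertible M \<Longrightarrow> hat M (tid M) k = mat 1"
  by (simp add: tid_def hat_unhat)

lemma hat_tconj: "invertible M \<Longrightarrow> hat M (tconj M A) k = cmat_adj (hat M A k)"
  by (simp add: tconj_def hat_unhat)

lemma is_MP_iff: "invertible M \<Longrightarrow> is_MP M A W \<longleftrightarrow> (\<forall>k. mat_MP (hat M A k) (hat M W k))"
  unfolding is_MP_def mat_MP_def by (simp add: teq_iff[of M] hat_mprod hat_tconj all_conj_distrib)

lemma tpinv_MP: "invertible M \<Longrightarrow> is_MP M A (tpinv M A)"
  unfolding tpinv_def
proof (rule theI')
  assume inv: "invertible M"
  define W0 where "W0 = unhat M (\<lambda>k. SOME W. mat_MP (hat M A k) W)"
  have "mat_MP (hat M A k) (hat M W0 k)" for k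
    unfolding W0_def hat_unhat[OF inv] by (rule someI_ex[OF MP_exists])
  hence W0: "is_MP M A W0" using is_MP_iff[OF inv] by blast
  moreover have "W = W0" if "is_MP M A W" for W
  proof (rule teq[OF inv])
    fix k
    show "hat M W k = hat M W0 k"
      using that W0 is_MP_iff[OF inv] MP_unique by blast
  qed
  ultimately show "\<exists>!W. is_MP M A W" by blast
qed

lemma mprod_assoc: "invertible M \<Longrightarrow> mprod M A (mprod M B C) = mprod M (mprod M A B) C"
  by (simp add: teq_iff hat_mprod matrix_mul_assoc)
lemma mprod_add_l: "invertible M \<Longrightarrow> mprod M (A + B) C = mprod M A C + mprod M B C"
  by (simp add: teq_iff hat_mprod hat_add mm_add_rdistrib)
lemma mprod_add_r: "invertible M \<Longrightarrow> mprod M C (A + B) = mprod M C A + mprod M C B"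
  by (simp add: teq_iff hat_mprod hat_add matrix_add_ldistrib)
lemma mprod_diff_l: "invertible M \<Longrightarrow> mprod M (A - B) C = mprod M A C - mprod M B C"
  by (simp add: teq_iff hat_mprod hat_diff mm_diff_rdistrib)
lemma mprod_diff_r: "invertible M \<Longrightarrow> mprod M C (A - B) = mprod M C A - mprod M C B"
  by (simp add: teq_iff hat_mprod hat_diff mm_diff_ldistrib)
lemma mprod_tid_l: "invertible M \<Longrightarrow> mprod M (tid M) C = C"
  by (simp add: teq_iff hat_mprod hat_tid)
lemma mprod_tid_r: "invertible M \<Longrightarrow> mprod M C (tid M) = C"
  by (simp add: teq_iff hat_mprod hat_tid)

lemma mZ: "invertible M \<Longrightarrow> mprod M X Y = W \<Longrightarrow> mprod M X (mprod M Y Z) = mprod M W Z"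
  by (simp add: mprod_assoc)

theorem theorem3p2:
  fixes M :: "complex^'k^'k" and A :: "complex^'k^'n2^'n1" and X :: "complex^'k^'n1^'n2"
  assumes "invertible M"
    and "X \<in> one_MP M A"
  shows "one_MP M A =
    {X + mprod M (mprod M (mprod M (tid M - mprod M X A) W) A) X | W :: complex^'k^'n1^'n2. True}"
proof -
  note inv = assms(1)
  define T where "T = tpinv M A"
  have AT: "mprod M (mprod M A T) A = A"
    using tpinv_MP[OF inv, of A] unfolding T_def is_MP_def by blast
  obtain G0 where G0: "mprod M (mprod M A G0) A = A" and X: "X = mprod M (mprod M G0 A) T"
    using assms(2) unfolding one_MP_def inv1_def T_def by blast
  note ra = mprod_assoc[OF inv, symmetric]
  have tB: "mprod M A (mprod M T A) = A" using AT by (simp add: ra)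
  have g0B: "mprod M A (mprod M G0 A) = A" using G0 by (simp add: ra)
  have tZ: "mprod M A (mprod M T (mprod M A Z)) = mprod M A Z" for Z
    using mZ[OF inv tB] by (simp add: ra)
  have g0Z: "mprod M A (mprod M G0 (mprod M A Z)) = mprod M A Z" for Z
    using mZ[OF inv g0B] by (simp add: ra)
  note simps = ra tB g0B tZ g0Z mprod_diff_l[OF inv] mprod_diff_r[OF inv]
    mprod_add_l[OF inv] mprod_add_r[OF inv] mprod_tid_l[OF inv] mprod_tid_r[OF inv]
  show ?thesis
  proof (intro set_eqI iffI)
    fix Y assume "Y \<in> one_MP M A"
    then obtain G where G: "mprod M (mprod M A G) A = A" and Y: "Y = mprod M (mprod M G A) T"
      unfolding one_MP_def inv1_def T_def by blast
    have gB: "mprod M A (mprod M G A) = A" using G by (simp add: ra)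
    have gZ: "mprod M A (mprod M G (mprod M A Z)) = mprod M A Z" for Z
      using mZ[OF inv gB] by (simp add: ra)
    have "Y = X + mprod M (mprod M (mprod M (tid M - mprod M X A) Y) A) X"
      unfolding X Y by (simp add: simps gB gZ)
    thus "Y \<in> {X + mprod M (mprod M (mprod M (tid M - mprod M X A) W) A) X | W :: complex^'k^'n1^'n2. True}"
      by blast
  next
    fix Y assume "Y \<in> {X + mprod M (mprod M (mprod M (tid M - mprod M X A) W) A) X | W :: complex^'k^'n1^'n2. True}"
    then obtain W where Y: "Y = X + mprod M (mprod M (mprod M (tid M - mprod M X A) W) A) X" by blast
    have e1: "mprod M (mprod M A Y) A = A" unfolding Y X by (simp add: simps)
    have e2: "Y = mprod M (mprod M Y A) T" unfolding Y X by (simp add: simps)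
    show "Y \<in> one_MP M A"
      unfolding one_MP_def inv1_def T_def[symmetric] using e1 e2 by blast
  qed
qed

end
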